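(* Let $\alpha_1,\alpha_2,\alpha_3,\alpha_4$ be positive integers. The graph $C(\alpha_1,\alpha_2,\alpha_3,\alpha_4)$ has exactly four distinct Laplacian eigenvalues if and only if, writing $\alpha=\alpha_1$, it is one of $C(\alpha,1,1,1)$, $C(\alpha,1,1+\alpha,1)$, $C(\alpha,1,1,2+\alpha)$, $C(\alpha,1,1+\alpha,1+\alpha)$, $C(\alpha,1,1+\alpha,2+2\alpha)$. Consequently, these are exactly the $\mathcal{C}$-graphs (with an even number $k$ of parts) having exactly four distinct Laplacian eigenvalues.
   Context: $C(\alpha_1,\dots,\alpha_k)$ is defined recursively by $C(\alpha_1)=\overline{K_{\alpha_1}}$ (edgeless graph) and $C(\alpha_1,\dots,\alpha_i)=\overline{C(\alpha_1,\dots,\alpha_{i-1})\cup K_{\alpha_i}}$ for $i=2,\dots,k$ (disjoint union, then complement); with $k$ even it is called a $\mathcal{C}$-graph. Equivalently for $k$ even, with $\pi_i$ the $\alpha_i$ vertices introduced at step $i$: $\pi_i$ is a clique for $i$ odd, independent for $i$ even, and for $i<j$ vertices of $\pi_i,\pi_j$ are adjacent iff $j$ is even. Laplacian eigenvalues are those of $L=D-A$. *)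

theory Defs
  imports Main "Jordan_Normal_Form.Char_Poly"
begin

text \<open>Graphs on vertex set {0..<n} given by an adjacency predicate on nat.
  cg_rev takes the part sizes in reverse order (last part first).
  Step: disjoint union of the previous graph (on {0..<n}) with a clique K_a on
  {n..<n+a}, then complement on {0..<n+a}. Starting from the empty graph on no
  vertices, one step yields the edgeless graph on a vertices, i.e. C(alpha_1).\<close>

fun cg_rev :: "nat list \<Rightarrow> nat \<Rightarrow> nat \<Rightarrow> bool" where
  "cg_rev [] = (\<lambda>u v. False)"
| "cg_rev (a # xs) =
     (\<lambda>u v. let n = sum_list xs in
        u \<noteq> v \<and> u < n + a \<and> v < n + a \<and>
        \<not> ((u < n \<and> v < n \<and> cg_rev xs u v) \<or> (n \<le> u \<and> n \<le> v)))"

definition cgraph :: "nat list \<Rightarrow> nat \<Rightarrow> nat \<Rightarrow> bool" where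
  "cgraph as = cg_rev (rev as)"

definition laplacian :: "nat \<Rightarrow> (nat \<Rightarrow> nat \<Rightarrow> bool) \<Rightarrow> real mat" where
  "laplacian n adj = mat n n (\<lambda>(i, j).
     if i = j then real (card {k. k < n \<and> adj i k})
     else if adj i j then -1 else 0)"

definition lap_eigenvalues :: "nat list \<Rightarrow> real set" where
  "lap_eigenvalues as = {\<mu>. eigenvalue (laplacian (sum_list as) (cgraph as)) \<mu>}"

end

theory Submission
  imports Defs
begin

definition lapv :: "nat \<Rightarrow> (nat\<Rightarrow>nat\<Rightarrow>bool) \<Rightarrow> (nat\<Rightarrow>real) \<Rightarrow> nat \<Rightarrow> real" where
 "lapv n adj v i = (\<Sum>j<n. if adj i j then v i - v j else 0)"

definition eig :: "nat \<Rightarrow> (nat\<Rightarrow>nat\<Rightarrow>bool) \<Rightarrow> real \<Rightarrow> bool" where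
 "eig n adj \<mu> \<longleftrightarrow> (\<exists>v. (\<exists>i<n. v i \<noteq> 0) \<and> (\<forall>i<n. lapv n adj v i = \<mu> * v i))"

lemma row_eq:
  assumes irr: "\<not> adj i i" and i: "i < n"
  shows "(\<Sum>j<n. laplacian n adj $$ (i,j) * v j) = lapv n adj v i"
proof -
  define c where "c = real (card {k. k < n \<and> adj i k})"
  define S where "S = (\<Sum>j<n. if adj i j then v j else 0)"
  have "(\<Sum>j<n. laplacian n adj $$ (i,j) * v j)
     = (\<Sum>j<n. (if i = j then c * v j else 0) + (if adj i j then - v j else 0))"
    by (rule sum.cong, simp, auto simp: laplacian_def i irr c_def)
  also have "\<dots> = (\<Sum>j<n. if i = j then c * v j else 0) + (\<Sum>j<n. if adj i j then - v j else 0)"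
    by (rule sum.distrib)
  finally have A: "(\<Sum>j<n. laplacian n adj $$ (i,j) * v j) = (\<Sum>j<n. if i = j then c * v j else 0) + (\<Sum>j<n. if adj i j then - v j else 0)" .
  have A2: "(\<Sum>j<n. if adj i j then - v j else 0) = - S"
    unfolding S_def by (subst sum_negf[symmetric]) (rule sum.cong, auto)
  have A3: "(\<Sum>j<n. if i = j then c * v j else 0) = c * v i"
    using i by simp
  have B: "(\<Sum>j<n. if adj i j then v i else 0) = c * v i"
    unfolding c_def by (simp add: sum.If_cases Int_def conj_commute)
  have C: "(\<Sum>j<n. if adj i j then v i else 0) - S = lapv n adj v i"
    unfolding lapv_def S_def by (subst sum_subtractf[symmetric]) (rule sum.cong, auto)
  show ?thesis using A A2 A3 B C by simp
qed

lemma eig_iff: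
  assumes irr: "\<And>i. \<not> adj i i"
  shows "eigenvalue (laplacian n adj) \<mu> \<longleftrightarrow> eig n adj \<mu>"
proof
  assume "eigenvalue (laplacian n adj) \<mu>"
  then obtain v where v: "v \<in> carrier_vec n" "v \<noteq> 0\<^sub>v n" "laplacian n adj *\<^sub>v v = \<mu> \<cdot>\<^sub>v v"
    unfolding eigenvalue_def eigenvector_def by (auto simp: laplacian_def)
  have "\<exists>i<n. v $ i \<noteq> 0" using v(1,2) by (auto simp: vec_eq_iff)
  moreover have "lapv n adj (\<lambda>j. v $ j) i = \<mu> * v $ i" if i: "i < n" for i
  proof -
    have "(laplacian n adj *\<^sub>v v) $ i = \<mu> * v $ i" using v i by simp
    moreover have "(laplacian n adj *\<^sub>v v) $ i = (\<Sum>j<n. laplacian n adj $$ (i,j) * v $ j)"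
      using i v(1) by (auto simp: laplacian_def scalar_prod_def lessThan_atLeast0 intro!: sum.cong)
    ultimately show ?thesis using row_eq[where adj=adj and i=i and n=n, OF irr[of i] i] by simp
  qed
  ultimately show "eig n adj \<mu>" unfolding eig_def by blast
next
  assume "eig n adj \<mu>"
  then obtain f where f: "\<exists>i<n. f i \<noteq> 0" "\<And>i. i<n \<Longrightarrow> lapv n adj f i = \<mu> * f i"
    unfolding eig_def by blast
  define v where "v = vec n f"
  have "eigenvector (laplacian n adj) v \<mu>"
    unfolding eigenvector_def
  proof (intro conjI)
    show "v \<in> carrier_vec (dim_row (laplacian n adj))" by (simp add: v_def laplacian_def)
    show "v \<noteq> 0\<^sub>v (dim_row (laplacian n adj))" using f(1) by (auto simp: v_def laplacian_def vec_eq_iff)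
    show "laplacian n adj *\<^sub>v v = \<mu> \<cdot>\<^sub>v v"
    proof (rule eq_vecI)
      fix i assume "i < dim_vec (\<mu> \<cdot>\<^sub>v v)"
      hence i: "i < n" by (simp add: v_def)
      have "(laplacian n adj *\<^sub>v v) $ i = (\<Sum>j<n. laplacian n adj $$ (i,j) * f j)"
        using i by (auto simp: laplacian_def scalar_prod_def lessThan_atLeast0 v_def intro!: sum.cong)
      also have "\<dots> = \<mu> * f i" using row_eq[where adj=adj and i=i and n=n, OF irr[of i] i] f(2)[OF i] by simp
      finally show "(laplacian n adj *\<^sub>v v) $ i = (\<mu> \<cdot>\<^sub>v v) $ i" using i by (simp add: v_def)
    qed (simp add: v_def laplacian_def)
  qed
  thus "eigenvalue (laplacian n adj) \<mu>" unfolding eigenvalue_def by blast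
qed

lemma cg_bounds: "cg_rev xs u v \<Longrightarrow> u \<noteq> v \<and> u < sum_list xs \<and> v < sum_list xs"
  by (cases xs) (auto simp: Let_def)

lemma cg_sym: "cg_rev xs u v = cg_rev xs v u"
  by (induction xs arbitrary: u v) (auto simp: Let_def)

lemma lapv_sum:
  assumes sym: "\<And>i j. adj i j = adj j i"
  shows "(\<Sum>i<n. lapv n adj v i) = 0"
proof -
  define f where "f i j = (if adj i j then v i - v j else 0)" for i j
  have fs: "f i j = - f j i" for i j unfolding f_def using sym[of i j] by auto
  have "(\<Sum>i<n. lapv n adj v i) = (\<Sum>i<n. \<Sum>j<n. f i j)" unfolding lapv_def f_def by simp
  also have "\<dots> = (\<Sum>j<n. \<Sum>i<n. f i j)" by (rule sum.swap)
  also have "\<dots> = (\<Sum>j<n. \<Sum>i<n. - f j i)" by (simp add: fs[symmetric])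
  also have "\<dots> = - (\<Sum>j<n. \<Sum>i<n. f j i)" by (simp add: sum_negf)
  finally show ?thesis by (simp add: lapv_def f_def)
qed

lemma lapv_cong: "(\<And>j. j < n \<Longrightarrow> v j = w j) \<Longrightarrow> i < n \<Longrightarrow> lapv n adj v i = lapv n adj w i"
  unfolding lapv_def by (rule sum.cong) auto

lemma sum_lt_split: "n \<le> N \<Longrightarrow> (\<Sum>j<N. (f::nat\<Rightarrow>real) j) = (\<Sum>j<n. f j) + (\<Sum>j\<in>{n..<N}. f j)"
  by (metis atLeast0LessThan sum.atLeastLessThan_concat zero_le)

context
  fixes a :: nat and xs :: "nat list"
begin

definition "nn = sum_list xs"
definition "NN = nn + a"
definition "HH u w = ((u < nn \<and> w < nn \<and> cg_rev xs u w) \<or> (nn \<le> u \<and> nn \<le> w))"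

lemma adj'_eq: "cg_rev (a # xs) u w = (u \<noteq> w \<and> u < NN \<and> w < NN \<and> \<not> HH u w)"
  by (simp add: Let_def NN_def nn_def HH_def)

lemma L1: fixes v :: "nat \<Rightarrow> real" assumes i: "i < NN"
  shows "lapv NN (cg_rev (a # xs)) v i = NN * v i - (\<Sum>j<NN. v j) - lapv NN HH v i"
proof -
  have "lapv NN (cg_rev (a # xs)) v i = (\<Sum>j<NN. (v i - v j) - (if HH i j then v i - v j else 0))"
    unfolding lapv_def adj'_eq using i by (intro sum.cong) auto
  also have "\<dots> = (\<Sum>j<NN. (v i - v j)) - lapv NN HH v i"
    unfolding lapv_def by (rule sum_subtractf)
  also have "(\<Sum>j<NN. (v i - v j)) = NN * v i - (\<Sum>j<NN. v j)"
    by (simp add: sum_subtractf)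
  finally show ?thesis .
qed

lemma L2: fixes v :: "nat \<Rightarrow> real" assumes i: "i < nn"
  shows "lapv NN HH v i = lapv nn (cg_rev xs) v i"
proof -
  have "lapv NN HH v i = (\<Sum>j<NN. if j < nn then (if cg_rev xs i j then v i - v j else 0) else 0)"
    unfolding lapv_def HH_def using i by (intro sum.cong) auto
  also have "\<dots> = (\<Sum>j<nn. if cg_rev xs i j then v i - v j else 0)"
    by (subst sum_lt_split[of nn]) (auto simp: NN_def)
  finally show ?thesis unfolding lapv_def .
qed

lemma L3: fixes v :: "nat \<Rightarrow> real" assumes i: "nn \<le> i" "i < NN"
  shows "lapv NN HH v i = a * v i - (\<Sum>j\<in>{nn..<NN}. v j)"
proof -
  have "lapv NN HH v i = (\<Sum>j<NN. if j < nn then 0 else v i - v j)"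
    unfolding lapv_def HH_def using i by (intro sum.cong) (auto dest: cg_bounds simp: nn_def)
  also have "\<dots> = (\<Sum>j\<in>{nn..<NN}. v i - v j)"
    by (subst sum_lt_split[of nn]) (auto simp: NN_def)
  also have "\<dots> = a * v i - (\<Sum>j\<in>{nn..<NN}. v j)"
    by (simp add: sum_subtractf NN_def)
  finally show ?thesis .
qed

end

lemma step:
  assumes a: "0 < a"
  shows "eig (sum_list (a # xs)) (cg_rev (a # xs)) \<mu> \<longleftrightarrow>
    \<mu> = 0 \<or> (\<exists>\<nu>. eig (sum_list xs) (cg_rev xs) \<nu> \<and> \<mu> = real (sum_list (a # xs)) - \<nu>)
    \<or> (2 \<le> a \<and> \<mu> = real (sum_list xs))"
proof -
  let ?n = "nn xs" and ?N = "NN a xs" and ?G = "cg_rev xs" and ?A = "cg_rev (a # xs)" and ?H = "HH xs"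
  have sl: "sum_list (a # xs) = ?N" "sum_list xs = ?n" by (simp_all add: NN_def nn_def)
  have symA: "\<And>i j. ?A i j = ?A j i" and symG: "\<And>i j. ?G i j = ?G j i" by (rule cg_sym)+
  have nN: "?n \<le> ?N" by (simp add: NN_def)
  have splitS: "\<And>v::nat\<Rightarrow>real. (\<Sum>j<?N. v j) = (\<Sum>j<?n. v j) + (\<Sum>j\<in>{?n..<?N}. v j)"
    by (rule sum_lt_split[OF nN])
  show ?thesis unfolding sl
  proof
    assume "eig ?N ?A \<mu>"
    then obtain v where v0: "\<exists>i<?N. v i \<noteq> 0" and ve: "\<And>i. i < ?N \<Longrightarrow> lapv ?N ?A v i = \<mu> * v i"
      unfolding eig_def by blast
    define s where "s = (\<Sum>j<?N. v j)"
    have "0 = (\<Sum>i<?N. lapv ?N ?A v i)" using lapv_sum[OF symA] by simp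
    also have "\<dots> = (\<Sum>i<?N. \<mu> * v i)" using ve by simp
    also have "\<dots> = \<mu> * s" by (simp add: s_def sum_distrib_left)
    finally have ms: "\<mu> * s = 0" by simp
    show "\<mu> = 0 \<or> (\<exists>\<nu>. eig ?n ?G \<nu> \<and> \<mu> = real ?N - \<nu>) \<or> (2 \<le> a \<and> \<mu> = real ?n)"
    proof (cases "\<mu> = 0")
      case False
      hence s0: "s = 0" using ms by simp
      have hv: "lapv ?N ?H v i = (?N - \<mu>) * v i" if "i < ?N" for i
      proof -
        have e1: "lapv ?N ?A v i = ?N * v i - s - lapv ?N ?H v i"
          using L1[where v=v, OF that] unfolding s_def .
        have e2: "(?N - \<mu>) * v i = ?N * v i - \<mu> * v i" by (rule left_diff_distrib)
        show ?thesis using e1 e2 ve[OF that] s0 by linarith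
      qed
      show ?thesis
      proof (cases "\<exists>i<?n. v i \<noteq> 0")
        case True
        have "\<forall>i<?n. lapv ?n ?G v i = (?N - \<mu>) * v i"
        proof (intro allI impI)
          fix i assume i: "i < ?n"
          hence iN: "i < ?N" using nN by linarith
          show "lapv ?n ?G v i = (?N - \<mu>) * v i" using L2[where v=v, OF i] hv[OF iN] by simp
        qed
        hence "eig ?n ?G (?N - \<mu>)" unfolding eig_def using True by blast
        thus ?thesis by auto
      next
        case False
        hence z: "\<And>i. i < ?n \<Longrightarrow> v i = 0" by auto
        have s2: "(\<Sum>j\<in>{?n..<?N}. v j) = 0" using s0 splitS[of v] z unfolding s_def by simp
        obtain i where i2: "i < ?N" "v i \<noteq> 0" using v0 by blast
        have i1: "?n \<le> i" proof (rule ccontr) assume "\<not> ?n \<le> i" thus False using z[of i] i2 by simp qed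
        note i = i1 i2
        have "a * v i = (?N - \<mu>) * v i" using L3[where v=v, OF i(1,2)] hv[OF i(2)] s2 by linarith
        hence "real a = ?N - \<mu>" using i(3) by (metis mult_right_cancel)
        moreover have "real ?N = real ?n + real a" by (simp add: NN_def)
        ultimately have mu: "\<mu> = ?n" by linarith
        have "2 \<le> a"
        proof (rule ccontr)
          assume "\<not> 2 \<le> a"
          hence "a = 1" using a by simp
          hence "{?n..<?N} = {?n}" by (auto simp: NN_def)
          hence "v ?n = 0" using s2 by simp
          moreover have "i = ?n" using i \<open>a = 1\<close> by (simp add: NN_def)
          ultimately show False using i by simp
        qed
        thus ?thesis using mu by simp
      qed
    qed simp
  next
    assume "\<mu> = 0 \<or> (\<exists>\<nu>. eig ?n ?G \<nu> \<and> \<mu> = real ?N - \<nu>) \<or> (2 \<le> a \<and> \<mu> = real ?n)"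
    moreover
    have gen: "eig ?N ?A \<mu>" if nz: "\<exists>i<?N. v i \<noteq> 0" and sv: "(\<Sum>j<?N. v j) = 0"
       and hv: "\<And>i. i < ?N \<Longrightarrow> lapv ?N ?H v i = (?N - \<mu>) * v i" for v
      unfolding eig_def
    proof (intro exI[of _ v] conjI allI impI nz)
      fix i assume i: "i < ?N"
      have e2: "(?N - \<mu>) * v i = ?N * v i - \<mu> * v i" by (rule left_diff_distrib)
      show "lapv ?N ?A v i = \<mu> * v i" using L1[where v=v, OF i] hv[OF i] sv e2 by linarith
    qed
    moreover
    {
      assume "\<mu> = 0"
      have l0: "lapv ?N ?A (\<lambda>_. 1::real) i = 0" for i unfolding lapv_def by (rule sum.neutral) simp
      have "eig ?N ?A \<mu>" unfolding eig_def
        using a \<open>\<mu> = 0\<close> l0 by (intro exI[of _ "\<lambda>_. 1::real"]) (auto simp: NN_def)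
    }
    moreover
    {
      assume "2 \<le> a" "\<mu> = real ?n"
      define v :: "nat \<Rightarrow> real" where "v j = (if j = ?n then 1 else 0) - (if j = Suc ?n then 1 else 0)" for j
      have lt: "?n < ?N" "Suc ?n < ?N" using \<open>2 \<le> a\<close> by (auto simp: NN_def)
      have sv: "(\<Sum>j<?N. v j) = 0" unfolding v_def using lt by (simp add: sum_subtractf)
      have s1: "(\<Sum>j<?n. v j) = 0" by (intro sum.neutral) (auto simp: v_def)
      have s2: "(\<Sum>j\<in>{?n..<?N}. v j) = 0" using sv splitS[of v] s1 by linarith
      have Na: "real ?N - \<mu> = real a" using \<open>\<mu> = real ?n\<close> by (simp add: NN_def)
      have "eig ?N ?A \<mu>"
      proof (rule gen[of v])
        show "\<exists>i<?N. v i \<noteq> 0" using lt by (intro exI[of _ ?n]) (simp add: v_def)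
        show "(\<Sum>j<?N. v j) = 0" by (rule sv)
        fix i assume i: "i < ?N"
        show "lapv ?N ?H v i = (?N - \<mu>) * v i"
        proof (cases "i < ?n")
          case True
          have "lapv ?n ?G v i = lapv ?n ?G (\<lambda>_. 0) i" by (rule lapv_cong) (auto simp: v_def True)
          moreover have "lapv ?n ?G (\<lambda>_. 0) i = 0" unfolding lapv_def by (rule sum.neutral) simp
          moreover have "v i = 0" using True by (simp add: v_def)
          ultimately show ?thesis using L2[where v=v, OF True] by simp
        next
          case False
          hence "?n \<le> i" by simp
          then show ?thesis using L3[where v=v, OF _ i] s2 Na by simp
        qed
      qed
    }
    moreover
    {
      fix \<nu> assume en: "eig ?n ?G \<nu>" and mu: "\<mu> = real ?N - \<nu>"
      obtain w where w0: "\<exists>i<?n. w i \<noteq> 0" and we: "\<And>i. i < ?n \<Longrightarrow> lapv ?n ?G w i = \<nu> * w i"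
        using en unfolding eig_def by blast
      have npos: "0 < ?n" using w0 by auto
      have "eig ?N ?A \<mu>"
      proof (cases "\<nu> = 0")
        case True
        define v :: "nat \<Rightarrow> real" where "v j = (if j < ?n then real a else - real ?n)" for j
        have t1: "(\<Sum>j<?n. v j) = (\<Sum>j<?n. real a)" by (rule sum.cong) (auto simp: v_def)
        have t2: "(\<Sum>j\<in>{?n..<?N}. v j) = (\<Sum>j\<in>{?n..<?N}. - real ?n)" by (rule sum.cong) (auto simp: v_def)
        have t3: "(\<Sum>j\<in>{?n..<?N}. - real ?n) = - (real ?n * real a)" by (simp add: NN_def)
        have t1': "(\<Sum>j<?n. real a) = real ?n * real a" by simp
        show ?thesis
        proof (rule gen[of v])
          show "\<exists>i<?N. v i \<noteq> 0" using npos a by (intro exI[of _ 0]) (simp add: v_def NN_def)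
          show "(\<Sum>j<?N. v j) = 0" using splitS[of v] t1 t2 t3 t1' by linarith
          fix i assume i: "i < ?N"
          show "lapv ?N ?H v i = (?N - \<mu>) * v i"
          proof (cases "i < ?n")
            case True
            have "lapv ?n ?G v i = lapv ?n ?G (\<lambda>_. real a) i" by (rule lapv_cong) (auto simp: v_def True)
            moreover have "lapv ?n ?G (\<lambda>_. real a) i = 0" unfolding lapv_def by (rule sum.neutral) simp
            moreover have "?N - \<mu> = 0" using mu \<open>\<nu> = 0\<close> by simp
            ultimately show ?thesis using L2[where v=v, OF True] by simp
          next
            case False
            hence "?n \<le> i" by simp
            moreover have "v i = - real ?n" using False by (simp add: v_def)
            moreover have "?N - \<mu> = 0" using mu \<open>\<nu> = 0\<close> by simp
            ultimately show ?thesis using L3[where v=v, OF _ i] t2 t3 by simp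
          qed
        qed
      next
        case False
        have "0 = (\<Sum>i<?n. lapv ?n ?G w i)" using lapv_sum[OF symG] by simp
        also have "\<dots> = (\<Sum>i<?n. \<nu> * w i)" using we by simp
        also have "\<dots> = \<nu> * (\<Sum>i<?n. w i)" by (simp add: sum_distrib_left)
        finally have sw: "(\<Sum>i<?n. w i) = 0" using False by simp
        define v :: "nat \<Rightarrow> real" where "v j = (if j < ?n then w j else 0)" for j
        have t1: "(\<Sum>j<?n. v j) = (\<Sum>j<?n. w j)" by (rule sum.cong) (auto simp: v_def)
        have t2: "(\<Sum>j\<in>{?n..<?N}. v j) = 0" by (rule sum.neutral) (auto simp: v_def)
        show ?thesis
        proof (rule gen[of v])
          show "\<exists>i<?N. v i \<noteq> 0" using w0 nN by (auto simp: v_def)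
          show "(\<Sum>j<?N. v j) = 0" using splitS[of v] sw t1 t2 by simp
          fix i assume i: "i < ?N"
          show "lapv ?N ?H v i = (?N - \<mu>) * v i"
          proof (cases "i < ?n")
            case True
            have "lapv ?n ?G v i = lapv ?n ?G w i" by (rule lapv_cong) (auto simp: v_def True)
            moreover have "v i = w i" using True by (simp add: v_def)
            moreover have "?N - \<mu> = \<nu>" using mu by simp
            ultimately show ?thesis using L2[where v=v, OF True] we[OF True] by simp
          next
            case False
            hence "?n \<le> i" by simp
            moreover have "v i = 0" using False by (simp add: v_def)
            ultimately show ?thesis using L3[where v=v, OF _ i] t2 by simp
          qed
        qed
      qed
    }
    ultimately show "eig ?N ?A \<mu>" by blast
  qed
qed

fun Ef :: "nat list \<Rightarrow> nat set" where
  "Ef [] = {}"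
| "Ef (a # xs) = insert 0 ((\<lambda>\<mu>. sum_list (a # xs) - \<mu>) ` Ef xs \<union> (if 2 \<le> a then {sum_list xs} else {}))"

lemma Ef_le: "\<mu> \<in> Ef xs \<Longrightarrow> \<mu> \<le> sum_list xs"
  by (induction xs arbitrary: \<mu>) (auto split: if_splits)

lemma Ef_finite: "finite (Ef xs)"
  by (induction xs) auto

lemma ES: "(\<forall>x\<in>set xs. 0 < x) \<Longrightarrow> {\<mu>. eig (sum_list xs) (cg_rev xs) \<mu>} = real ` Ef xs"
proof (induction xs)
  case Nil
  then show ?case by (simp add: eig_def)
next
  case (Cons a xs)
  hence a: "0 < a" and IH: "{\<mu>. eig (sum_list xs) (cg_rev xs) \<mu>} = real ` Ef xs" by auto
  show ?case
  proof (rule Set.set_eqI)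
    fix \<mu>
    have "\<mu> \<in> {\<mu>. eig (sum_list (a # xs)) (cg_rev (a # xs)) \<mu>} \<longleftrightarrow>
      \<mu> = 0 \<or> (\<exists>\<nu>. \<nu> \<in> real ` Ef xs \<and> \<mu> = real (sum_list (a # xs)) - \<nu>)
    \<or> (2 \<le> a \<and> \<mu> = real (sum_list xs))"
      using IH by (simp only: mem_Collect_eq step[OF a] IH[symmetric])
    also have "\<dots> \<longleftrightarrow> \<mu> \<in> real ` Ef (a # xs)"
    proof -
      have "(\<exists>\<nu>. \<nu> \<in> real ` Ef xs \<and> \<mu> = real (sum_list (a # xs)) - \<nu>) \<longleftrightarrow>
            \<mu> \<in> real ` ((\<lambda>\<mu>. sum_list (a # xs) - \<mu>) ` Ef xs)"
      proof
        assume "\<exists>\<nu>. \<nu> \<in> real ` Ef xs \<and> \<mu> = real (sum_list (a # xs)) - \<nu>"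
        then obtain k where k: "k \<in> Ef xs" "\<mu> = real (sum_list (a # xs)) - real k" by auto
        have "k \<le> sum_list (a # xs)" using Ef_le[OF k(1)] by simp
        hence "\<mu> = real (sum_list (a # xs) - k)" using k(2) by (simp add: of_nat_diff)
        thus "\<mu> \<in> real ` ((\<lambda>\<mu>. sum_list (a # xs) - \<mu>) ` Ef xs)" using k(1) by blast
      next
        assume "\<mu> \<in> real ` ((\<lambda>\<mu>. sum_list (a # xs) - \<mu>) ` Ef xs)"
        then obtain k where k: "k \<in> Ef xs" "\<mu> = real (sum_list (a # xs) - k)" by auto
        have "k \<le> sum_list (a # xs)" using Ef_le[OF k(1)] by simp
        hence "\<mu> = real (sum_list (a # xs)) - real k" using k(2) by (simp add: of_nat_diff)
        thus "\<exists>\<nu>. \<nu> \<in> real ` Ef xs \<and> \<mu> = real (sum_list (a # xs)) - \<nu>" using k(1) by blast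
      qed
      thus ?thesis by (auto simp del: sum_list.Cons)
    qed
    finally show "\<mu> \<in> {\<mu>. eig (sum_list (a # xs)) (cg_rev (a # xs)) \<mu>} \<longleftrightarrow> \<mu> \<in> real ` Ef (a # xs)" .
  qed
qed

lemma lap_Ef: "(\<forall>x\<in>set as. 0 < x) \<Longrightarrow> lap_eigenvalues as = real ` Ef (rev as)"
proof -
  assume p: "\<forall>x\<in>set as. 0 < x"
  have irr: "\<And>i. \<not> cg_rev (rev as) i i" using cg_bounds by blast
  have "lap_eigenvalues as = {\<mu>. eig (sum_list (rev as)) (cg_rev (rev as)) \<mu>}"
    unfolding lap_eigenvalues_def cgraph_def by (intro Set.set_eqI) (simp add: eig_iff[where adj="cg_rev (rev as)", OF irr])
  also have "\<dots> = real ` Ef (rev as)" using ES[of "rev as"] p by simp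
  finally show ?thesis .
qed

lemma card_lap: "(\<forall>x\<in>set as. 0 < x) \<Longrightarrow> card (lap_eigenvalues as) = card (Ef (rev as))"
  by (simp add: lap_Ef card_image inj_on_def)

lemma card_grow: "0 < a \<Longrightarrow> Suc (card (Ef xs)) \<le> card (Ef (a # xs))"
proof -
  assume a: "0 < a"
  let ?f = "\<lambda>\<mu>. sum_list (a # xs) - \<mu>"
  have inj: "inj_on ?f (Ef xs)" by (rule inj_onI) (auto dest!: Ef_le)
  have z: "0 \<notin> ?f ` Ef xs" using a by (auto dest!: Ef_le)
  have fin: "finite (insert 0 (?f ` Ef xs \<union> (if 2 \<le> a then {sum_list xs} else {})))" by (simp add: Ef_finite)
  have "Suc (card (Ef xs)) = Suc (card (?f ` Ef xs))" using card_image[OF inj] by simp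
  also have "\<dots> = card (insert 0 (?f ` Ef xs))" using z by (simp add: Ef_finite)
  also have "\<dots> \<le> card (insert 0 (?f ` Ef xs \<union> (if 2 \<le> a then {sum_list xs} else {})))"
    by (rule card_mono[OF fin]) auto
  finally show ?thesis by (simp del: sum_list.Cons)
qed

lemma card_len: "(\<forall>x\<in>set xs. 0 < x) \<Longrightarrow> length xs \<le> card (Ef xs)"
proof (induction xs)
  case (Cons a xs)
  thus ?case using card_grow[of a xs] by auto
qed simp

lemma Ef4:
  assumes "0 < a" "0 < b" "0 < c" "0 < d"
  shows "Ef [d,c,b,a] = {0, a+b+c+d, d, a+b+d} \<union> ((if 2\<le>b then {a+d} else {}) \<union> (if 2\<le>c then {c+d} else {}) \<union> (if 2\<le>d then {a+b+c} else {}))"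
  using assms by (cases "2\<le>b"; cases "2\<le>c"; cases "2\<le>d") (auto simp: image_iff)


lemma four:
  assumes a: "0 < a" and b: "0 < b" and c: "0 < c" and d: "0 < d"
  shows "card (Ef [d,c,b,a]) = 4 \<longleftrightarrow>
     (b, c, d) \<in> {(1, 1, 1), (1, 1 + a, 1), (1, 1, 2 + a), (1, 1 + a, 1 + a), (1, 1 + a, 2 + 2 * a)}"
proof -
  define B where "B = {0, a+b+c+d, d, a+b+d}"
  define Op where "Op = (if 2\<le>b then {a+d} else {}) \<union> (if 2\<le>c then {c+d} else {}) \<union> (if 2\<le>d then {a+b+c} else {})"
  have cB: "card B = 4" unfolding B_def using a b c d by auto
  have fB: "finite B" "finite Op" unfolding B_def Op_def by auto
  have e1: "card (B \<union> Op) = 4 \<longleftrightarrow> Op \<subseteq> B"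
  proof
    assume "card (B \<union> Op) = 4"
    hence "B = B \<union> Op" using card_subset_eq[of "B \<union> Op" B] fB cB by auto
    thus "Op \<subseteq> B" by blast
  next
    assume "Op \<subseteq> B" thus "card (B \<union> Op) = 4" using cB by (simp add: Un_absorb2)
  qed
  have e2: "Op \<subseteq> B \<longleftrightarrow> (2\<le>b \<longrightarrow> a+d \<in> B) \<and> (2\<le>c \<longrightarrow> c+d \<in> B) \<and> (2\<le>d \<longrightarrow> a+b+c \<in> B)"
    unfolding Op_def by auto
  have m1: "a+d \<in> B \<longleftrightarrow> False" unfolding B_def using a b c d by auto
  have m2: "c+d \<in> B \<longleftrightarrow> c = a+b" unfolding B_def using a b c d by auto
  have m3: "a+b+c \<in> B \<longleftrightarrow> d = a+b+c \<or> d = c" unfolding B_def using a b c d by auto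
  have e3: "((2\<le>b \<longrightarrow> False) \<and> (2\<le>c \<longrightarrow> c = a+b) \<and> (2\<le>d \<longrightarrow> d = a+b+c \<or> d = c)) \<longleftrightarrow>
     (b, c, d) \<in> {(1, 1, 1), (1, 1 + a, 1), (1, 1, 2 + a), (1, 1 + a, 1 + a), (1, 1 + a, 2 + 2 * a)}"
    using a b c d by (cases "b=1"; cases "c=1"; cases "d=1") auto
  have "card (Ef [d,c,b,a]) = card (B \<union> Op)" using Ef4[OF a b c d] unfolding B_def Op_def by simp
  thus ?thesis using e1 e2 e3 m1 m2 m3 by simp
qed


lemma l1: assumes "even (length (as::nat list))" "length as \<ge> 2"
  shows "length as = 2 \<or> length as = 4 \<or> length as \<ge> 6"
proof -
  obtain k where "length as = 2 * k" using assms(1) by blast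
  thus ?thesis using assms(2) by arith
qed
lemma l2: "length (as::nat list) = 2 \<Longrightarrow> \<exists>x y. as = [x,y]"
  by (auto simp: length_Suc_conv numeral_2_eq_2)
lemma l4: "length (as::nat list) = 4 \<Longrightarrow> \<exists>a b c d. as = [a,b,c,d]"
  by (auto simp: length_Suc_conv numeral_eq_Suc)

lemma Ef2: "card (Ef [b,a]) \<le> 3"
proof -
  have "Ef [b,a] \<subseteq> {0, a+b, a}" by auto
  hence "card (Ef [b,a]) \<le> card {0, a+b, a}" by (rule card_mono[rotated]) simp
  also have "\<dots> \<le> 3" by (simp add: card_insert_le_m1)
  finally show ?thesis .
qed

theorem mainTheorem10:
  fixes a1 a2 a3 a4 :: nat
  assumes "0 < a1" "0 < a2" "0 < a3" "0 < a4"
  shows "(card (lap_eigenvalues [a1, a2, a3, a4]) = 4 \<longleftrightarrow>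
           (a2, a3, a4) \<in> {(1, 1, 1), (1, 1 + a1, 1), (1, 1, 2 + a1),
                            (1, 1 + a1, 1 + a1), (1, 1 + a1, 2 + 2 * a1)})
       \<and> (\<forall>as :: nat list. even (length as) \<and> length as \<ge> 2 \<and> (\<forall>x \<in> set as. 0 < x) \<longrightarrow>
            (card (lap_eigenvalues as) = 4 \<longleftrightarrow>
              (\<exists>a. as \<in> {[a, 1, 1, 1], [a, 1, 1 + a, 1], [a, 1, 1, 2 + a],
                         [a, 1, 1 + a, 1 + a], [a, 1, 1 + a, 2 + 2 * a]})))"
proof
  have gen4: "card (lap_eigenvalues [a, b, c, d]) = 4 \<longleftrightarrow>
           (b, c, d) \<in> {(1, 1, 1), (1, 1 + a, 1), (1, 1, 2 + a),
                            (1, 1 + a, 1 + a), (1, 1 + a, 2 + 2 * a)}"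
    if "0 < a" "0 < b" "0 < c" "0 < d" for a b c d
    using four[OF that] card_lap[of "[a,b,c,d]"] that by simp
  show "card (lap_eigenvalues [a1, a2, a3, a4]) = 4 \<longleftrightarrow>
           (a2, a3, a4) \<in> {(1, 1, 1), (1, 1 + a1, 1), (1, 1, 2 + a1),
                            (1, 1 + a1, 1 + a1), (1, 1 + a1, 2 + 2 * a1)}"
    by (rule gen4[OF assms])
  show "\<forall>as :: nat list. even (length as) \<and> length as \<ge> 2 \<and> (\<forall>x \<in> set as. 0 < x) \<longrightarrow>
            (card (lap_eigenvalues as) = 4 \<longleftrightarrow>
              (\<exists>a. as \<in> {[a, 1, 1, 1], [a, 1, 1 + a, 1], [a, 1, 1, 2 + a],
                         [a, 1, 1 + a, 1 + a], [a, 1, 1 + a, 2 + 2 * a]}))"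
  proof (intro allI impI)
    fix as :: "nat list"
    assume h: "even (length as) \<and> length as \<ge> 2 \<and> (\<forall>x \<in> set as. 0 < x)"
    hence pos: "\<forall>x \<in> set as. 0 < x" by blast
    have cl: "card (lap_eigenvalues as) = card (Ef (rev as))" by (rule card_lap[OF pos])
    consider (two) "length as = 2" | (four) "length as = 4" | (big) "length as \<ge> 6"
      using l1[of as] h by blast
    then show "card (lap_eigenvalues as) = 4 \<longleftrightarrow>
              (\<exists>a. as \<in> {[a, 1, 1, 1], [a, 1, 1 + a, 1], [a, 1, 1, 2 + a],
                         [a, 1, 1 + a, 1 + a], [a, 1, 1 + a, 2 + 2 * a]})"
    proof cases
      case two
      then obtain x y where "as = [x, y]" using l2 by blast
      moreover have "card (Ef [y, x]) \<le> 3" by (rule Ef2)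
      ultimately show ?thesis using cl by auto
    next
      case big
      have "length (rev as) \<le> card (Ef (rev as))" using card_len[of "rev as"] pos by simp
      hence "card (lap_eigenvalues as) \<ge> 6" using big cl by simp
      moreover have "\<not> (\<exists>a. as \<in> {[a, 1, 1, 1], [a, 1, 1 + a, 1], [a, 1, 1, 2 + a],
                         [a, 1, 1 + a, 1 + a], [a, 1, 1 + a, 2 + 2 * a]})" using big by auto
      ultimately show ?thesis by simp
    next
      case four
      then obtain a b c d where as: "as = [a, b, c, d]"
        using l4 by blast
      have p: "0 < a" "0 < b" "0 < c" "0 < d" using pos as by auto
      show ?thesis unfolding as gen4[OF p] by auto
    qed
  qed
qed

end
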